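(* Let $V:\mathbb{R}\to\mathbb{R}$ be analytic at the origin. Suppose that (1) there exist a function $f$ of $u$ (independent of $m$) and constants $c_m$ (independent of $u$) such that for every non-negative integer $m$, $$V^{(2m+1)}\left(\frac{u}{2}\right)=c_m\,f(u),$$ where $V^{(2m+1)}$ denotes the $(2m+1)$-th derivative of $V$; and (2) the series $\sum_{m=0}^{\infty}\frac{c_m\,v^{2m+1}}{2^{2m}(2m+1)!}$ converges in some neighborhood of $v=0$. Then $V$ is separable, with divisors $$F(u)=f(u),\qquad G(v)=\sum_{m=0}^{\infty}\frac{c_m\,v^{2m+1}}{2^{2m}(2m+1)!},$$ i.e. $V\left(\frac{u+v}{2}\right)-V\left(\frac{u-v}{2}\right)=F(u)\,G(v)$.
   Context: A potential $V(q)$ is called separable if $V\left(\frac{u+v}{2}\right)-V\left(\frac{u-v}{2}\right)=F(u)\,G(v)$ where $F$ and $G$ are univariate functions of $u$ and $v$ respectively; $F$ and $G$ are called the divisors of $V$. *)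

theory Defs
  imports "HOL-Analysis.Analysis"
begin

definition real_analytic_at :: "(real \<Rightarrow> real) \<Rightarrow> real \<Rightarrow> bool" where
  "real_analytic_at V x0 \<longleftrightarrow>
     (\<exists>r>0. \<exists>a::nat \<Rightarrow> real. \<forall>x. \<bar>x - x0\<bar> < r \<longrightarrow> (\<lambda>n. a n * (x - x0) ^ n) sums V x)"

definition separable_on :: "(real \<times> real) set \<Rightarrow> (real \<Rightarrow> real) \<Rightarrow> (real \<Rightarrow> real) \<Rightarrow> (real \<Rightarrow> real) \<Rightarrow> bool" where
  "separable_on D V F G \<longleftrightarrow>
     (\<forall>(u, v) \<in> D. V ((u + v) / 2) - V ((u - v) / 2) = F u * G v)"

end

theory Submission
  imports Defs "HOL-Complex_Analysis.Complex_Analysis"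
begin

lemma real_deriv_Re:
  fixes h :: "complex \<Rightarrow> complex"
  assumes "(h has_field_derivative D) (at (of_real y))"
  shows "((\<lambda>t. Re (h (of_real t))) has_real_derivative Re D) (at y)"
proof -
  have 1: "(h has_derivative (\<lambda>x. D * x)) (at (of_real y))"
    using assms by (simp add: has_field_derivative_def)
  have 2: "((of_real :: real \<Rightarrow> complex) has_derivative of_real) (at y)"
    by (rule bounded_linear.has_derivative[OF bounded_linear_of_real has_derivative_ident])
  have 3: "((h \<circ> of_real) has_derivative ((\<lambda>x. D * x) \<circ> of_real)) (at y)"
    by (rule diff_chain_at[OF 2 1])
  have 4: "((\<lambda>t. Re ((h \<circ> of_real) t)) has_derivative (\<lambda>t. Re (((\<lambda>x. D * x) \<circ> of_real) t))) (at y)"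
    by (rule bounded_linear.has_derivative[OF bounded_linear_Re 3])
  have 5: "(\<lambda>t. Re (((\<lambda>x. D * x) \<circ> of_real) t)) = (\<lambda>t. Re D * t)"
    by (auto simp: fun_eq_iff)
  show ?thesis using 4 unfolding 5 has_field_derivative_def by (simp add: o_def)
qed

lemma re_term: "Re (X / fact n * (complex_of_real h) ^ n) = Re X / fact n * h ^ n"
proof -
  have "(fact n :: complex) = of_real (fact n)" by simp
  then have "X / fact n * (complex_of_real h) ^ n = (X * of_real (h^n)) / of_real (fact n)" by simp
  then show ?thesis by (simp only: Re_divide_of_real) simp
qed

lemma g_facts:
  fixes V :: "real \<Rightarrow> real" and a :: "nat \<Rightarrow> real"
  assumes r: "r > 0" and ser: "\<forall>x. \<bar>x - 0\<bar> < r \<longrightarrow> (\<lambda>n. a n * (x - 0) ^ n) sums V x"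
  defines "g \<equiv> \<lambda>z::complex. \<Sum>n. of_real (a n) * z ^ n"
  shows "g holomorphic_on ball 0 r"
    and "\<And>x. \<bar>x\<bar> < r \<Longrightarrow> g (of_real x) = of_real (V x)"
proof -
  have sm: "summable (\<lambda>n. of_real (a n) * (of_real x :: complex) ^ n)" if "\<bar>x\<bar> < r" for x
  proof -
    have "summable (\<lambda>n. a n * x ^ n)" using ser that by (auto intro: sums_summable)
    then have "summable (\<lambda>n. complex_of_real (a n * x ^ n))" by (simp only: summable_complex_of_real)
    then show ?thesis by (simp only: of_real_mult of_real_power)
  qed
  have "\<exists>D. (g has_field_derivative D) (at z)" if "norm z < r" for z
  proof -
    define x where "x = (norm z + r) / 2"
    have x0: "0 \<le> x" "x < r" "norm z < x" using that norm_ge_zero[of z] unfolding x_def by (auto simp del: norm_ge_zero)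
    then have "\<bar>x\<bar> < r" "norm z < norm (of_real x :: complex)" by auto
    then show ?thesis unfolding g_def using termdiffs_strong[OF sm] by blast
  qed
  then show "g holomorphic_on ball 0 r"
    unfolding holomorphic_on_def field_differentiable_def
    by (meson has_field_derivative_at_within mem_ball_0)
  show "g (of_real x) = of_real (V x)" if "\<bar>x\<bar> < r" for x
  proof -
    have "(\<lambda>n. a n * x ^ n) sums V x" using ser that by auto
    then have "(\<lambda>n. complex_of_real (a n * x ^ n)) sums of_real (V x)" by (simp only: sums_of_real_iff)
    then show ?thesis unfolding g_def by (simp add: sums_iff)
  qed
qed

lemma higher_re:
  fixes V :: "real \<Rightarrow> real" and g :: "complex \<Rightarrow> complex"
  assumes holo: "g holomorphic_on ball 0 r"
    and eq: "\<And>x. \<bar>x\<bar> < r \<Longrightarrow> g (of_real x) = of_real (V x)"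
  shows "\<bar>x\<bar> < r \<Longrightarrow> (deriv ^^ n) V x = Re ((deriv ^^ n) g (of_real x))"
proof (induction n arbitrary: x)
  case 0
  then show ?case using eq by simp
next
  case (Suc n)
  have ev: "eventually (\<lambda>y. (deriv ^^ n) V y = Re ((deriv ^^ n) g (of_real y))) (nhds x)"
  proof -
    have "x \<in> ball (0::real) r" using Suc.prems by simp
    then have "eventually (\<lambda>y. y \<in> ball (0::real) r) (nhds x)" by (rule eventually_nhds_in_open[OF open_ball])
    then show ?thesis by eventually_elim (use Suc.IH in auto)
  qed
  have H: "(deriv ^^ n) g holomorphic_on ball 0 r" by (rule holomorphic_higher_deriv[OF holo]) simp
  have "((deriv ^^ n) g has_field_derivative deriv ((deriv ^^ n) g) (of_real x)) (at (of_real x))"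
    by (rule holomorphic_derivI[OF H]) (use Suc.prems in auto)
  then have D: "((\<lambda>t. Re ((deriv ^^ n) g (of_real t))) has_real_derivative Re (deriv ((deriv ^^ n) g) (of_real x))) (at x)"
    by (rule real_deriv_Re)
  have "(deriv ^^ Suc n) V x = deriv ((deriv ^^ n) V) x" by simp
  also have "\<dots> = deriv (\<lambda>t. Re ((deriv ^^ n) g (of_real t))) x"
    by (rule deriv_cong_ev[OF ev refl])
  also have "\<dots> = Re (deriv ((deriv ^^ n) g) (of_real x))"
    by (rule DERIV_imp_deriv[OF D])
  finally show ?case by simp
qed

lemma odd_term:
  fixes d v :: real
  shows "d * (v / 2) ^ (2 * m + 1) - d * (- v / 2) ^ (2 * m + 1) = d * v ^ (2 * m + 1) / 2 ^ (2 * m)"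
proof -
  have "(- v / 2) ^ (2 * m + 1) = - ((v / 2) ^ (2 * m + 1))"
    by (simp add: power_minus_odd del: power_Suc)
  moreover have "(v / 2) ^ (2 * m + 1) = v ^ (2 * m + 1) / (2 * 2 ^ (2 * m))"
    by (simp add: power_divide)
  ultimately show ?thesis by simp
qed

theorem theorem2:
  fixes V f :: "real \<Rightarrow> real" and c :: "nat \<Rightarrow> real"
  assumes analytic: "real_analytic_at V 0"
    and derivs: "\<exists>\<epsilon>>0. \<forall>u. \<bar>u\<bar> < \<epsilon> \<longrightarrow>
                   (\<forall>m::nat. (deriv ^^ (2 * m + 1)) V (u / 2) = c m * f u)"
    and conv: "\<exists>\<rho>>0. \<forall>v::real. \<bar>v\<bar> < \<rho> \<longrightarrow>
                 summable (\<lambda>m. c m * v ^ (2 * m + 1) / (2 ^ (2 * m) * fact (2 * m + 1)))"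
  shows "\<exists>\<delta>>0. separable_on {(u, v). \<bar>u\<bar> < \<delta> \<and> \<bar>v\<bar> < \<delta>} V f
           (\<lambda>v. \<Sum>m. c m * v ^ (2 * m + 1) / (2 ^ (2 * m) * fact (2 * m + 1)))"
proof -
  obtain r a where r: "r > 0" and ser: "\<forall>x. \<bar>x - 0\<bar> < r \<longrightarrow> (\<lambda>n. a n * (x - 0) ^ n) sums V x"
    using analytic unfolding real_analytic_at_def by blast
  obtain \<epsilon> where e: "\<epsilon> > 0" and de: "\<forall>u. \<bar>u\<bar> < \<epsilon> \<longrightarrow>
                   (\<forall>m::nat. (deriv ^^ (2 * m + 1)) V (u / 2) = c m * f u)" using derivs by blast
  obtain \<rho> where p: "\<rho> > 0" and cv: "\<forall>v::real. \<bar>v\<bar> < \<rho> \<longrightarrow>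
                 summable (\<lambda>m. c m * v ^ (2 * m + 1) / (2 ^ (2 * m) * fact (2 * m + 1)))" using conv by blast
  define g where "g \<equiv> \<lambda>z::complex. \<Sum>n. of_real (a n) * z ^ n"
  have holo: "g holomorphic_on ball 0 r" and geq: "\<And>x. \<bar>x\<bar> < r \<Longrightarrow> g (of_real x) = of_real (V x)"
    using g_facts[OF r ser] unfolding g_def by auto
  have hr: "\<And>x n. \<bar>x\<bar> < r \<Longrightarrow> (deriv ^^ n) V x = Re ((deriv ^^ n) g (of_real x))"
    using higher_re[OF holo geq] by blast
  have taylor: "(\<lambda>n. (deriv ^^ n) V w / fact n * h ^ n) sums V (w + h)"
    if w: "\<bar>w\<bar> + \<bar>h\<bar> < r" for w h
  proof -
    have wr: "\<bar>w\<bar> < r" and whr: "\<bar>w + h\<bar> < r" using w by auto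
    have sub: "ball (of_real w) (r - \<bar>w\<bar>) \<subseteq> ball (0::complex) r"
    proof
      fix z :: complex assume "z \<in> ball (of_real w) (r - \<bar>w\<bar>)"
      then have "norm (z - of_real w) < r - \<bar>w\<bar>" by (simp add: dist_norm norm_minus_commute)
      moreover have "norm z \<le> norm (z - of_real w) + norm (of_real w :: complex)"
        using norm_triangle_ineq[of "z - of_real w" "of_real w"] by simp
      ultimately show "z \<in> ball 0 r" by simp
    qed
    have inb: "of_real (w + h) \<in> ball (of_real w :: complex) (r - \<bar>w\<bar>)"
      using w by (simp add: dist_norm flip: of_real_diff)
    have "(\<lambda>n. (deriv ^^ n) g (of_real w) / fact n * (of_real (w + h) - of_real w) ^ n) sums g (of_real (w + h))"
      by (rule holomorphic_power_series[OF holomorphic_on_subset[OF holo sub] inb])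
    then have "(\<lambda>n. Re ((deriv ^^ n) g (of_real w) / fact n * (of_real h) ^ n)) sums Re (g (of_real (w + h)))"
      by (intro sums_Re) simp
    then show ?thesis by (simp only: re_term geq[OF whr] Re_complex_of_real hr[OF wr, symmetric])
  qed
  define \<delta> where "\<delta> = min r (min \<epsilon> \<rho>)"
  have dp: "\<delta> > 0" using r e p by (simp add: \<delta>_def)
  have "separable_on {(u, v). \<bar>u\<bar> < \<delta> \<and> \<bar>v\<bar> < \<delta>} V f
           (\<lambda>v. \<Sum>m. c m * v ^ (2 * m + 1) / (2 ^ (2 * m) * fact (2 * m + 1)))"
    unfolding separable_on_def
  proof clarify
    fix u v :: real
    assume u: "\<bar>u\<bar> < \<delta>" and v: "\<bar>v\<bar> < \<delta>"
    define d where "d n = (deriv ^^ n) V (u / 2) / fact n" for n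
    have s1: "(\<lambda>n. d n * (v / 2) ^ n) sums V ((u + v) / 2)"
      using taylor[of "u/2" "v/2"] u v by (simp add: \<delta>_def d_def add_divide_distrib)
    have s2: "(\<lambda>n. d n * (- v / 2) ^ n) sums V ((u - v) / 2)"
      using taylor[of "u/2" "- v/2"] u v by (simp add: \<delta>_def d_def diff_divide_distrib)
    have s: "(\<lambda>n. d n * (v / 2) ^ n - d n * (- v / 2) ^ n) sums (V ((u + v) / 2) - V ((u - v) / 2))"
      by (rule sums_diff[OF s1 s2])
    have sm: "strict_mono (\<lambda>m::nat. 2 * m + 1)" by (auto simp: strict_mono_def)
    have z: "d n * (v / 2) ^ n - d n * (- v / 2) ^ n = 0" if "n \<notin> range (\<lambda>m::nat. 2 * m + 1)" for n
    proof -
      have "even n" using that by (metis oddE rangeI)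
      then show ?thesis by (simp add: power_minus_even)
    qed
    have s3: "(\<lambda>m. d (2*m+1) * (v / 2) ^ (2*m+1) - d (2*m+1) * (- v / 2) ^ (2*m+1)) sums (V ((u + v) / 2) - V ((u - v) / 2))"
      using sums_mono_reindex[OF sm, of "\<lambda>n. d n * (v / 2) ^ n - d n * (- v / 2) ^ n"] z s by blast
    have teq: "d (2*m+1) * (v / 2) ^ (2*m+1) - d (2*m+1) * (- v / 2) ^ (2*m+1)
        = f u * (c m * v ^ (2 * m + 1) / (2 ^ (2 * m) * fact (2 * m + 1)))" for m
    proof -
      have "(deriv ^^ (2 * m + 1)) V (u / 2) = c m * f u" using de u by (simp add: \<delta>_def)
      then show ?thesis unfolding odd_term d_def by (simp add: field_simps)
    qed
    have s4: "(\<lambda>m. f u * (c m * v ^ (2 * m + 1) / (2 ^ (2 * m) * fact (2 * m + 1)))) sums (V ((u + v) / 2) - V ((u - v) / 2))"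
      using s3 unfolding teq .
    have "summable (\<lambda>m. c m * v ^ (2 * m + 1) / (2 ^ (2 * m) * fact (2 * m + 1)))"
      using cv v by (simp add: \<delta>_def)
    then have "(\<lambda>m. f u * (c m * v ^ (2 * m + 1) / (2 ^ (2 * m) * fact (2 * m + 1)))) sums
        (f u * (\<Sum>m. c m * v ^ (2 * m + 1) / (2 ^ (2 * m) * fact (2 * m + 1))))"
      by (intro sums_mult summable_sums)
    with s4 show "V ((u + v) / 2) - V ((u - v) / 2) = f u * (\<Sum>m. c m * v ^ (2 * m + 1) / (2 ^ (2 * m) * fact (2 * m + 1)))"
      using sums_unique2 by blast
  qed
  then show ?thesis using dp by blast
qed

end
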